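(* Let $r,t$ be integers with $1 \leq t\leq r-2$. Then there exist an $r$-regular graph $G$ that has a $t$-factor and a set $\mathcal{O}$ of pairwise edge-disjoint odd cycles of $G$ such that every $t$-factor of $G$ is edge-disjoint from at least one cycle of $\mathcal{O}$.
   Context: All graphs are finite and loopless but may have parallel edges. A cycle is a connected $2$-regular subgraph; it is odd if it has an odd number of edges. A $t$-factor of $G$ is a spanning $t$-regular subgraph. *)

theory Defs
  imports Main
begin

text \<open>A finite loopless multigraph: vertex set V, edge set E, and an endpoint map
  giving each edge a set of exactly two distinct vertices (parallel edges allowed,
  since distinct edges may have the same endpoints).\<close>

definition multigraph :: "'v set \<Rightarrow> 'e set \<Rightarrow> ('e \<Rightarrow> 'v set) \<Rightarrow> bool" where
  "multigraph V E ends \<longleftrightarrow> finite V \<and> finite E \<and>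
     (\<forall>e\<in>E. ends e \<subseteq> V \<and> card (ends e) = 2)"

definition degree_in :: "'e set \<Rightarrow> ('e \<Rightarrow> 'v set) \<Rightarrow> 'v \<Rightarrow> nat" where
  "degree_in F ends v = card {e\<in>F. v \<in> ends e}"

definition regular :: "'v set \<Rightarrow> 'e set \<Rightarrow> ('e \<Rightarrow> 'v set) \<Rightarrow> nat \<Rightarrow> bool" where
  "regular V E ends r \<longleftrightarrow> (\<forall>v\<in>V. degree_in E ends v = r)"

definition t_factor :: "'v set \<Rightarrow> 'e set \<Rightarrow> ('e \<Rightarrow> 'v set) \<Rightarrow> nat \<Rightarrow> 'e set \<Rightarrow> bool" where
  "t_factor V E ends t F \<longleftrightarrow> F \<subseteq> E \<and> regular V F ends t"

definition verts_of :: "('e \<Rightarrow> 'v set) \<Rightarrow> 'e set \<Rightarrow> 'v set" where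
  "verts_of ends C = (\<Union>e\<in>C. ends e)"

definition connected_edges :: "('e \<Rightarrow> 'v set) \<Rightarrow> 'e set \<Rightarrow> bool" where
  "connected_edges ends C \<longleftrightarrow>
     (\<forall>u\<in>verts_of ends C. \<forall>v\<in>verts_of ends C.
        (u, v) \<in> {(x, y). \<exists>e\<in>C. ends e = {x, y}}\<^sup>*)"

definition is_cycle :: "'e set \<Rightarrow> ('e \<Rightarrow> 'v set) \<Rightarrow> 'e set \<Rightarrow> bool" where
  "is_cycle E ends C \<longleftrightarrow> C \<noteq> {} \<and> C \<subseteq> E \<and>
     regular (verts_of ends C) C ends 2 \<and> connected_edges ends C"

definition odd_cycle :: "'e set \<Rightarrow> ('e \<Rightarrow> 'v set) \<Rightarrow> 'e set \<Rightarrow> bool" where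
  "odd_cycle E ends C \<longleftrightarrow> is_cycle E ends C \<and> odd (card C)"

end

theory Submission
  imports Defs
begin


definition S :: "'v set \<Rightarrow> ('v \<Rightarrow> 'v \<Rightarrow> nat) \<Rightarrow> ('v set \<times> nat) set" where
  "S V g = (\<Union>a\<in>V. \<Union>b\<in>V-{a}. (\<lambda>n. ({a,b},n)) ` {..<g a b})"

lemma S_mem: "(e \<in> S V g) \<longleftrightarrow> (\<exists>a b n. e = ({a,b},n) \<and> a\<in>V \<and> b\<in>V \<and> a\<noteq>b \<and> n < g a b)"
  unfolding S_def by auto

lemma finite_S: "finite V \<Longrightarrow> finite (S V g)"
  unfolding S_def by auto

lemma S_mono: "(\<And>a b. g a b \<le> h a b) \<Longrightarrow> S V g \<subseteq> S V h"
proof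
  fix e assume A: "\<And>a b. g a b \<le> h a b" and "e \<in> S V g"
  then obtain a b n where "e = ({a,b},n)" "a\<in>V" "b\<in>V" "a\<noteq>b" "n < g a b" by (auto simp: S_mem)
  moreover have "n < h a b" using A[of a b] \<open>n < g a b\<close> by linarith
  ultimately show "e \<in> S V h" unfolding S_mem by blast
qed

lemma deg_S:
  assumes fin: "finite V" and x: "x \<in> V" and sym: "\<And>a b. g a b = g b a"
  shows "card {e\<in>S V g. x \<in> fst e} = (\<Sum>y\<in>V-{x}. g x y)"
proof -
  have eq: "{e\<in>S V g. x \<in> fst e} = (\<Union>y\<in>V-{x}. (\<lambda>n. ({x,y},n)) ` {..<g x y})"
  proof (rule set_eqI, rule iffI)
    fix e assume "e \<in> {e\<in>S V g. x \<in> fst e}"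
    then obtain a b n where e: "e = ({a,b},n)" "a\<in>V" "b\<in>V" "a\<noteq>b" "n < g a b" "x \<in> {a,b}"
      by (auto simp: S_mem)
    show "e \<in> (\<Union>y\<in>V-{x}. (\<lambda>n. ({x,y},n)) ` {..<g x y})"
    proof (cases "x = a")
      case True thus ?thesis using e by auto
    next
      case False
      hence "x = b" using e by auto
      thus ?thesis using e sym[of a b] by (auto simp: insert_commute)
    qed
  next
    fix e assume "e \<in> (\<Union>y\<in>V-{x}. (\<lambda>n. ({x,y},n)) ` {..<g x y})"
    thus "e \<in> {e\<in>S V g. x \<in> fst e}" using x by (auto simp: S_mem)
  qed
  have "card (\<Union>y\<in>V-{x}. (\<lambda>n. ({x,y},n)) ` {..<g x y}) = (\<Sum>y\<in>V-{x}. card ((\<lambda>n. ({x,y},n)) ` {..<g x y}))"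
    by (rule card_UN_disjoint) (use fin in \<open>auto simp: doubleton_eq_iff\<close>)
  also have "\<dots> = (\<Sum>y\<in>V-{x}. g x y)"
    by (rule sum.cong) (auto simp: card_image inj_on_def)
  finally show ?thesis using eq by simp
qed

lemma deg_S':
  assumes fin: "finite V" and x: "x \<in> V" and sym: "\<And>a b. g a b = g b a" and z: "g x x = 0"
  shows "degree_in (S V g) fst x = (\<Sum>y\<in>V. g x y)"
proof -
  have "(\<Sum>y\<in>V. g x y) = (\<Sum>y\<in>V-{x}. g x y)"
    using fin x z by (simp add: sum.remove)
  thus ?thesis using deg_S[OF assms(1-3)] unfolding degree_in_def by simp
qed

lemma handshake:
  assumes "finite F" "finite X"
  shows "(\<Sum>x\<in>X. card {e\<in>F. x \<in> ends e}) = (\<Sum>e\<in>F. card (ends e \<inter> X))"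
proof -
  have "(\<Sum>x\<in>X. card {e\<in>F. x \<in> ends e}) = (\<Sum>x\<in>X. \<Sum>e\<in>F. if x \<in> ends e then 1 else 0)"
    using assms by (simp add: sum.If_cases Collect_conj_eq Int_commute)
  also have "\<dots> = (\<Sum>e\<in>F. \<Sum>x\<in>X. if x \<in> ends e then 1 else 0)" by (rule sum.swap)
  also have "\<dots> = (\<Sum>e\<in>F. card (ends e \<inter> X))"
    using assms by (simp add: sum.If_cases Int_commute)
  finally show ?thesis .
qed



lemma parity_cut:
  assumes fin: "finite F" "finite X" and two: "\<And>e. e\<in>F \<Longrightarrow> card (ends e) = 2"
    and ev: "even (\<Sum>x\<in>X. card {e\<in>F. x \<in> ends e})"
  shows "even (card {e\<in>F. card (ends e \<inter> X) = 1})"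
proof -
  have le: "card (ends e \<inter> X) \<le> 2" if "e \<in> F" for e
  proof -
    have "finite (ends e)" using two[OF that] by (metis card.infinite zero_neq_numeral)
    hence "card (ends e \<inter> X) \<le> card (ends e)" by (simp add: card_mono)
    thus ?thesis using two[OF that] by simp
  qed
  have "(\<Sum>e\<in>F. card (ends e \<inter> X)) = (\<Sum>e\<in>F. (if card (ends e \<inter> X) = 1 then 1 else 0) + 2 * (if card (ends e \<inter> X) = 2 then 1 else 0))"
  proof (rule sum.cong)
    fix e assume "e \<in> F" thus "card (ends e \<inter> X) = (if card (ends e \<inter> X) = 1 then 1 else 0) + 2 * (if card (ends e \<inter> X) = 2 then 1 else 0)"
    proof -
      have "card (ends e \<inter> X) \<le> 2" using le \<open>e\<in>F\<close> by blast
      then obtain c where c: "c = card (ends e \<inter> X)" "c \<le> 2" by blast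
      have "c = (if c = 1 then 1 else 0) + 2 * (if c = 2 then 1 else 0)"
        using c(2) by (cases c) (auto simp: numeral_2_eq_2 le_Suc_eq)
      thus ?thesis using c(1) by simp
    qed
  qed simp
  also have "\<dots> = card {e\<in>F. card (ends e \<inter> X) = 1} + 2 * card {e\<in>F. card (ends e \<inter> X) = 2}"
    using fin by (simp add: sum.distrib sum.If_cases sum_distrib_left[symmetric] Collect_conj_eq Int_commute)
  finally have "(\<Sum>e\<in>F. card (ends e \<inter> X)) = card {e\<in>F. card (ends e \<inter> X) = 1} + 2 * card {e\<in>F. card (ends e \<inter> X) = 2}" .
  with ev handshake[OF fin, of ends] show ?thesis by simp
qed



datatype vtx = Hub bool | Tri bool nat bool | Gad bool nat bool nat

locale cons =
  fixes r t m l k j :: nat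
  assumes rml: "2*m + l = r" and lt: "l < r - t" and tr: "t + 2 \<le> r"
    and kj: "2*k + j = t" and km: "k \<le> m" and jl: "j \<le> l"
begin

fun mb :: "vtx \<Rightarrow> vtx \<Rightarrow> nat" where
  "mb (Hub a) (Hub b) = (if a = False \<and> b = True then l else 0)"
| "mb (Hub a) (Tri h i s) = (if a = h \<and> i < m then 1 else 0)"
| "mb (Tri h i s) (Tri h' i' s') = (if h = h' \<and> i = i' \<and> i < m \<and> s = False \<and> s' = True then 1 else 0)"
| "mb (Tri h i s) (Gad h' i' s' q) = (if h = h' \<and> i = i' \<and> s = s' \<and> i < m \<and> q = 0 then r - 2 else 0)"
| "mb (Gad h i s q) (Gad h' i' s' q') = (if h = h' \<and> i = i' \<and> s = s' \<and> i < m \<and> q = 0 \<and> (q' = 1 \<or> q' = 2) then 1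
      else if h = h' \<and> i = i' \<and> s = s' \<and> i < m \<and> q = 1 \<and> q' = 2 then r - 1 else 0)"
| "mb _ _ = 0"

fun fb :: "vtx \<Rightarrow> vtx \<Rightarrow> nat" where
  "fb (Hub a) (Hub b) = (if a = False \<and> b = True then j else 0)"
| "fb (Hub a) (Tri h i s) = (if a = h \<and> i < k then 1 else 0)"
| "fb (Tri h i s) (Tri h' i' s') = (if h = h' \<and> i = i' \<and> i < k \<and> s = False \<and> s' = True then 1 else 0)"
| "fb (Tri h i s) (Gad h' i' s' q) = (if h = h' \<and> i = i' \<and> s = s' \<and> i < m \<and> q = 0 then (if i < k then t - 2 else t) else 0)"
| "fb (Gad h i s q) (Gad h' i' s' q') = (if h = h' \<and> i = i' \<and> s = s' \<and> i < k \<and> q = 0 \<and> (q' = 1 \<or> q' = 2) then 1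
      else if h = h' \<and> i = i' \<and> s = s' \<and> i < m \<and> q = 1 \<and> q' = 2 then (if i < k then t - 1 else t) else 0)"
| "fb _ _ = 0"

definition mult where "mult x y = mb x y + mb y x"
definition fm where "fm x y = fb x y + fb y x"

lemma fb_le: "fb x y \<le> mb x y"
  using km tr jl by (cases x; cases y) auto

lemma fm_le: "fm x y \<le> mult x y"
  unfolding fm_def mult_def using fb_le[of x y] fb_le[of y x] by linarith

lemma mult_sym: "mult x y = mult y x" unfolding mult_def by simp
lemma fm_sym: "fm x y = fm y x" unfolding fm_def by simp

definition V :: "vtx set" where
  "V = range Hub \<union> {Tri h i s | h i s. i < m} \<union> {Gad h i s q | h i s q. i < m \<and> q < 3}"

lemma finite_V: "finite V"
proof -
  have "{Tri h i s | h i s. i < m} = (\<lambda>(h,i,s). Tri h i s) ` (UNIV \<times> {..<m} \<times> UNIV)" by (auto simp: image_iff)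
  moreover have "{Gad h i s q | h i s q. i < m \<and> q < 3} = (\<lambda>(h,i,s,q). Gad h i s q) ` (UNIV \<times> {..<m} \<times> UNIV \<times> {..<3})" by (auto simp: image_iff)
  ultimately show ?thesis unfolding V_def by simp
qed

fun N :: "vtx \<Rightarrow> vtx set" where
  "N (Hub h) = insert (Hub (\<not>h)) {Tri h i s | i s. i < m}"
| "N (Tri h i s) = {Hub h, Tri h i (\<not>s), Gad h i s 0}"
| "N (Gad h i s q) = (if q = 0 then {Tri h i s, Gad h i s 1, Gad h i s 2} else if q = 1 then {Gad h i s 0, Gad h i s 2}
     else if q = 2 then {Gad h i s 0, Gad h i s 1} else {})"

lemma mult_N: "mult x y \<noteq> 0 \<Longrightarrow> y \<in> N x"
  unfolding mult_def by (cases x; cases y) (auto split: if_splits)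

end


context cons begin

lemma TriS_eq: "{Tri h i s | i s. i < m} = (\<lambda>(i,s). Tri h i s) ` ({..<m} \<times> UNIV)"
  by (auto simp: image_iff)

lemma finite_TriS: "finite {Tri h i s | i s. i < m}"
  unfolding TriS_eq by simp

lemma N_sub: "x \<in> V \<Longrightarrow> N x \<subseteq> V"
  unfolding V_def by (cases x) auto

lemma sum_N:
  assumes x: "x \<in> V" and z: "\<And>y. mult x y = 0 \<Longrightarrow> g y = 0"
  shows "(\<Sum>y\<in>V. g y) = (\<Sum>y\<in>N x. g y)"
proof (rule sum.mono_neutral_right[OF finite_V N_sub[OF x]])
  show "\<forall>y\<in>V - N x. g y = 0" using mult_N z by blast
qed

lemma hub_sum:
  "(\<Sum>y\<in>{Tri h i s | i s. i < m}. g y) = (\<Sum>i<m. g (Tri h i False) + g (Tri h i True))"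
proof -
  have "(\<Sum>y\<in>{Tri h i s | i s. i < m}. g y) = (\<Sum>p\<in>{..<m} \<times> UNIV. g (Tri h (fst p) (snd p)))"
    unfolding TriS_eq by (subst sum.reindex) (auto simp: inj_on_def case_prod_beta)
  also have "\<dots> = (\<Sum>i<m. \<Sum>s\<in>UNIV. g (Tri h i s))"
    unfolding sum.cartesian_product by (simp add: case_prod_beta)
  also have "\<dots> = (\<Sum>i<m. g (Tri h i False) + g (Tri h i True))"
    by (simp add: UNIV_bool)
  finally show ?thesis .
qed

lemma deg_mult: assumes "x \<in> V" shows "(\<Sum>y\<in>N x. mult x y) = r"
proof (cases x)
  case (Hub h)
  have "(\<Sum>y\<in>N x. mult x y) = mult (Hub h) (Hub (\<not>h)) + (\<Sum>y\<in>{Tri h i s | i s. i < m}. mult (Hub h) y)"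
    using Hub by (simp only: N.simps, subst sum.insert[OF finite_TriS]) auto
  also have "(\<Sum>y\<in>{Tri h i s | i s. i < m}. mult (Hub h) y) = (\<Sum>i<m. 2)"
    by (subst hub_sum) (simp add: mult_def)
  also have "mult (Hub h) (Hub (\<not>h)) = l" by (cases h) (auto simp: mult_def)
  finally show ?thesis using rml by simp
next
  case (Tri h i s)
  hence "i < m" using assms unfolding V_def by auto
  thus ?thesis using Tri tr by (cases s) (auto simp: mult_def)
next
  case (Gad h i s q)
  hence "i < m" "q < 3" using assms unfolding V_def by auto
  thus ?thesis using Gad tr by (auto simp: mult_def numeral_3_eq_3 less_Suc_eq)
qed

lemma deg_fm: assumes "x \<in> V" shows "(\<Sum>y\<in>N x. fm x y) = t"
proof (cases x)
  case (Hub h)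
  have "(\<Sum>y\<in>N x. fm x y) = fm (Hub h) (Hub (\<not>h)) + (\<Sum>y\<in>{Tri h i s | i s. i < m}. fm (Hub h) y)"
    using Hub by (simp only: N.simps, subst sum.insert[OF finite_TriS]) auto
  also have "(\<Sum>y\<in>{Tri h i s | i s. i < m}. fm (Hub h) y) = (\<Sum>i<m. if i < k then 2 else 0)"
  proof -
    have "\<And>i. fm (Hub h) (Tri h i False) + fm (Hub h) (Tri h i True) = (if i < k then 2 else 0)"
      by (simp add: fm_def)
    thus ?thesis by (subst hub_sum) (simp only:)
  qed
  also have "\<dots> = (\<Sum>i<k. 2)"
  proof -
    have "{..<m} \<inter> {i. i < k} = {..<k}" using km by auto
    thus ?thesis by (simp add: sum.If_cases)
  qed
  also have "fm (Hub h) (Hub (\<not>h)) = j" by (cases h) (auto simp: fm_def)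
  finally show ?thesis using kj by simp
next
  case (Tri h i s)
  hence "i < m" using assms unfolding V_def by auto
  thus ?thesis using Tri tr kj by (cases s) (auto simp: fm_def)
next
  case (Gad h i s q)
  hence "i < m" "q < 3" using assms unfolding V_def by auto
  thus ?thesis using Gad tr kj by (auto simp: fm_def numeral_3_eq_3 less_Suc_eq)
qed

definition E where "E = S V mult"
definition F0 where "F0 = S V fm"

lemma mult_diag: "mult x x = 0" unfolding mult_def by (cases x) auto
lemma fm_diag: "fm x x = 0" unfolding fm_def by (cases x) auto

lemma fm_zero: "mult x y = 0 \<Longrightarrow> fm x y = 0"
  using fm_le[of x y] by simp

lemma degE: "x \<in> V \<Longrightarrow> degree_in E fst x = r"
  unfolding E_def
  by (subst deg_S'[OF finite_V _ mult_sym mult_diag], assumption)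
     (subst sum_N, auto simp: deg_mult)

lemma degF0: "x \<in> V \<Longrightarrow> degree_in F0 fst x = t"
  unfolding F0_def
  by (subst deg_S'[OF finite_V _ fm_sym fm_diag], assumption)
     (subst sum_N, auto simp: deg_fm intro: fm_zero)

end


context cons begin

lemma E_mem: "e \<in> E \<longleftrightarrow> (\<exists>a b n. e = ({a,b},n) \<and> a\<in>V \<and> b\<in>V \<and> a\<noteq>b \<and> n < mult a b)"
  unfolding E_def S_mem ..

lemma multigraph: "multigraph V E fst"
  unfolding multigraph_def using finite_V finite_S[OF finite_V, of mult] by (auto simp: E_def[symmetric] E_mem)

lemma regularE: "regular V E fst r" unfolding regular_def using degE by blast

lemma F0_factor: "t_factor V E fst t F0"
  unfolding t_factor_def regular_def F0_def E_def
  using S_mono[of fm mult V, OF fm_le] degF0[unfolded F0_def] by blast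

definition X where "X h i s = {Tri h i s, Gad h i s 0, Gad h i s 1, Gad h i s 2}"

lemma card1: "a \<noteq> b \<Longrightarrow> card ({a,b} \<inter> Y) = 1 \<longleftrightarrow> (a \<in> Y) \<noteq> (b \<in> Y)"
  by (cases "a \<in> Y"; cases "b \<in> Y") auto

lemma X_out:
  assumes "x \<in> X h i s" "y \<notin> X h i s" "mult x y \<noteq> 0"
  shows "x = Tri h i s \<and> (y = Hub h \<or> y = Tri h i (\<not>s))"
  using mult_N[OF assms(3)] assms(1,2) unfolding X_def by (auto split: if_splits)

lemma mult_hub_tri: "i < m \<Longrightarrow> mult (Tri h i s) (Hub h) = 1" by (simp add: mult_def)
lemma mult_tri_tri: "i < m \<Longrightarrow> mult (Tri h i s) (Tri h i (\<not>s)) = 1" by (cases s) (simp_all add: mult_def)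

lemma cut:
  assumes im: "i < m"
  shows "{e\<in>E. card (fst e \<inter> X h i s) = 1} = {({Hub h, Tri h i s},0), ({Tri h i False, Tri h i True},0)}"
proof (rule set_eqI, rule iffI)
  fix e assume "e \<in> {e\<in>E. card (fst e \<inter> X h i s) = 1}"
  then obtain a b n where e: "e = ({a,b},n)" "a\<in>V" "b\<in>V" "a\<noteq>b" "n < mult a b" and c: "card ({a,b} \<inter> X h i s) = 1"
    by (auto simp: E_mem)
  have gen: "e = ({x,y},n) \<Longrightarrow> x \<in> X h i s \<Longrightarrow> y \<notin> X h i s \<Longrightarrow> n < mult x y \<Longrightarrow>
     e \<in> {({Hub h, Tri h i s},0), ({Tri h i False, Tri h i True},0)}" for x y
  proof -
    assume a: "e = ({x,y},n)" "x \<in> X h i s" "y \<notin> X h i s" "n < mult x y"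
    hence o: "x = Tri h i s \<and> (y = Hub h \<or> y = Tri h i (\<not>s))" using X_out by (metis not_less_zero neq0_conv)
    show ?thesis
    proof (cases "y = Hub h")
      case True
      hence "n = 0" using a(4) o mult_hub_tri[OF im] by simp
      thus ?thesis using a(1) o True by (auto simp: insert_commute)
    next
      case False
      hence y: "y = Tri h i (\<not>s)" using o by blast
      hence "n = 0" using a(4) o mult_tri_tri[OF im] by simp
      thus ?thesis using a(1) o y by (cases s) (auto simp: insert_commute)
    qed
  qed
  have "(a \<in> X h i s) \<noteq> (b \<in> X h i s)" using c card1[OF e(4)] by blast
  thus "e \<in> {({Hub h, Tri h i s},0), ({Tri h i False, Tri h i True},0)}"
  proof (cases "a \<in> X h i s")
    case True thus ?thesis using gen[of a b] e \<open>(a \<in> X h i s) \<noteq> (b \<in> X h i s)\<close> by blast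
  next
    case False thus ?thesis using gen[of b a] e \<open>(a \<in> X h i s) \<noteq> (b \<in> X h i s)\<close> mult_sym[of a b]
      by (auto simp: insert_commute)
  qed
next
  fix e assume e: "e \<in> {({Hub h, Tri h i s},0::nat), ({Tri h i False, Tri h i True},0)}"
  have V: "Hub h \<in> V" "Tri h i s' \<in> V" for s' using im unfolding V_def by auto
  have m1: "mult (Hub h) (Tri h i s) = 1" "mult (Tri h i False) (Tri h i True) = 1"
    using im by (auto simp: mult_def)
  have "e \<in> E" using e
  proof
    assume "e = ({Hub h, Tri h i s},0)"
    thus ?thesis unfolding E_mem using V m1 by (intro exI[of _ "Hub h"] exI[of _ "Tri h i s"] exI[of _ 0]) auto
  next
    assume "e \<in> {({Tri h i False, Tri h i True},0)}"
    thus ?thesis unfolding E_mem using V m1 by (intro exI[of _ "Tri h i False"] exI[of _ "Tri h i True"] exI[of _ 0]) auto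
  qed
  moreover have "card (fst e \<inter> X h i s) = 1"
    using e unfolding X_def by (cases s) auto
  ultimately show "e \<in> {e\<in>E. card (fst e \<inter> X h i s) = 1}" by blast
qed

end


context cons begin

lemma finite_E: "finite E" unfolding E_def using finite_S[OF finite_V] .

lemma both:
  assumes F: "t_factor V E fst t F" and im: "i < m"
  shows "(({Hub h, Tri h i s},0) \<in> F) \<longleftrightarrow> (({Tri h i False, Tri h i True},0) \<in> F)"
proof -
  have FE: "F \<subseteq> E" and deg: "\<And>v. v \<in> V \<Longrightarrow> card {e\<in>F. v \<in> fst e} = t"
    using F unfolding t_factor_def regular_def degree_in_def by auto
  have finF: "finite F" using FE finite_E finite_subset by blast
  have two: "card (fst e) = 2" if eF: "e \<in> F" for e
  proof -
    have "e \<in> E" using eF FE by blast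
    then obtain a b n where "e = ({a,b},n)" "a \<noteq> b" unfolding E_mem by blast
    thus ?thesis by simp
  qed
  have XV: "X h i s \<subseteq> V" using im unfolding X_def V_def by auto
  have "(\<Sum>x\<in>X h i s. card {e\<in>F. x \<in> fst e}) = (\<Sum>x\<in>X h i s. t)"
    using deg XV by (intro sum.cong) auto
  also have "\<dots> = 4 * t" unfolding X_def by simp
  finally have ev: "even (\<Sum>x\<in>X h i s. card {e\<in>F. x \<in> fst e})" by simp
  have "even (card {e\<in>F. card (fst e \<inter> X h i s) = 1})"
    by (rule parity_cut[OF finF _ two ev]) (simp add: X_def)
  moreover have "{e\<in>F. card (fst e \<inter> X h i s) = 1} = F \<inter> {({Hub h, Tri h i s},0), ({Tri h i False, Tri h i True},0)}"
    using cut[OF im, of h s] FE by blast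
  moreover have "({Hub h, Tri h i s},0::nat) \<noteq> ({Tri h i False, Tri h i True},0)"
    by (cases s) (auto simp: doubleton_eq_iff)
  ultimately show ?thesis by (auto split: if_splits simp: Int_insert_right)
qed

definition cyc where "cyc i = {({Hub False, Tri False i False},0::nat), ({Hub False, Tri False i True},0), ({Tri False i False, Tri False i True},0)}"

lemma avoid:
  assumes F: "t_factor V E fst t F"
  shows "\<exists>i<m. F \<inter> cyc i = {}"
proof -
  have FE: "F \<subseteq> E" and deg: "\<And>v. v \<in> V \<Longrightarrow> card {e\<in>F. v \<in> fst e} = t"
    using F unfolding t_factor_def regular_def degree_in_def by auto
  have HV: "Hub False \<in> V" unfolding V_def by auto
  have finF: "finite F" using FE finite_E finite_subset by blast
  define I where "I = {e\<in>E. Hub False \<in> fst e}"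
  define L where "L = (\<lambda>n. ({Hub False, Hub True}, n)) ` {..<l}"
  have cI: "card I = r" using degE[OF HV] unfolding I_def degree_in_def .
  have cF: "card {e\<in>F. Hub False \<in> fst e} = t" using deg[OF HV] .
  have cL: "card L = l" unfolding L_def by (simp add: card_image inj_on_def)
  have "\<exists>e\<in>I. e \<notin> F \<and> e \<notin> L"
  proof (rule ccontr)
    assume "\<not> ?thesis"
    hence "I \<subseteq> {e\<in>F. Hub False \<in> fst e} \<union> L" unfolding I_def by auto
    hence "card I \<le> card ({e\<in>F. Hub False \<in> fst e} \<union> L)"
      by (rule card_mono[rotated]) (use finF in \<open>auto simp: L_def\<close>)
    also have "\<dots> \<le> t + l" using card_Un_le[of "{e\<in>F. Hub False \<in> fst e}" L] cF cL by simp
    finally show False using cI lt by simp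
  qed
  then obtain e where eI: "e \<in> I" and eF: "e \<notin> F" and eL: "e \<notin> L" by blast
  obtain y n where ey: "e = ({Hub False, y}, n)" "y \<in> V" "y \<noteq> Hub False" "n < mult (Hub False) y"
  proof -
    obtain a b n where e: "e = ({a,b},n)" "a\<in>V" "b\<in>V" "a\<noteq>b" "n < mult a b" "Hub False \<in> {a,b}"
      using eI unfolding I_def E_mem by auto
    show ?thesis
    proof (cases "a = Hub False")
      case True thus ?thesis using that e by blast
    next
      case False thus ?thesis using that[of a n] e mult_sym[of a b] by (auto simp: insert_commute)
    qed
  qed
  have "y \<in> N (Hub False)" using mult_N ey(4) by (metis not_less_zero neq0_conv)
  moreover have "y \<noteq> Hub True"
  proof
    assume "y = Hub True"
    hence "e \<in> L" using ey(1,4) unfolding L_def by (auto simp: mult_def)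
    thus False using eL by blast
  qed
  ultimately obtain i s where y: "y = Tri False i s" "i < m" by auto
  have "n = 0" using ey(4) y by (simp add: mult_def)
  hence e: "e = ({Hub False, Tri False i s}, 0)" using ey y by simp
  have b1: "(({Hub False, Tri False i s'},0) \<in> F) \<longleftrightarrow> (({Tri False i False, Tri False i True},0) \<in> F)" for s'
    using both[OF F y(2)] .
  have "F \<inter> cyc i = {}"
    using eF e b1[of s] b1[of "\<not>s"] unfolding cyc_def by (cases s) auto
  thus ?thesis using y(2) by blast
qed

end


context cons begin

lemma cyc_odd: assumes im: "i < m" shows "odd_cycle E fst (cyc i)"
proof -
  let ?h = "Hub False" and ?p = "Tri False i False" and ?q = "Tri False i True"
  have V: "?h \<in> V" "?p \<in> V" "?q \<in> V" using im unfolding V_def by auto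
  have m1: "mult ?h ?p = 1" "mult ?h ?q = 1" "mult ?p ?q = 1" using im by (auto simp: mult_def)
  have inE: "({x,y},0) \<in> E" if "x \<in> V" "y \<in> V" "x \<noteq> y" "mult x y = 1" for x y
    unfolding E_mem using that by (intro exI[of _ x] exI[of _ y] exI[of _ 0]) auto
  have sub: "cyc i \<subseteq> E" unfolding cyc_def using inE[OF V(1) V(2)] inE[OF V(1) V(3)] inE[OF V(2) V(3)] m1 by auto
  have verts: "verts_of fst (cyc i) = {?h, ?p, ?q}" unfolding verts_of_def cyc_def by auto
  have d1: "{e\<in>cyc i. ?h \<in> fst e} = {({?h,?p},0), ({?h,?q},0)}" unfolding cyc_def by auto
  have d2: "{e\<in>cyc i. ?p \<in> fst e} = {({?h,?p},0), ({?p,?q},0)}" unfolding cyc_def by auto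
  have d3: "{e\<in>cyc i. ?q \<in> fst e} = {({?h,?q},0), ({?p,?q},0)}" unfolding cyc_def by auto
  have reg: "regular (verts_of fst (cyc i)) (cyc i) fst 2"
    unfolding regular_def degree_in_def verts using d1 d2 d3 by (auto simp: doubleton_eq_iff)
  have R: "(u, v) \<in> {(x, y). \<exists>e\<in>cyc i. fst e = {x, y}}" if "u \<in> {?h,?p,?q}" "v \<in> {?h,?p,?q}" "u \<noteq> v" for u v
  proof -
    have "(?h,?p) \<in> {(x, y). \<exists>e\<in>cyc i. fst e = {x, y}}" "(?p,?h) \<in> {(x, y). \<exists>e\<in>cyc i. fst e = {x, y}}"
         "(?h,?q) \<in> {(x, y). \<exists>e\<in>cyc i. fst e = {x, y}}" "(?q,?h) \<in> {(x, y). \<exists>e\<in>cyc i. fst e = {x, y}}"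
         "(?p,?q) \<in> {(x, y). \<exists>e\<in>cyc i. fst e = {x, y}}" "(?q,?p) \<in> {(x, y). \<exists>e\<in>cyc i. fst e = {x, y}}"
      unfolding cyc_def by (simp_all only: case_prod_conv mem_Collect_eq bex_simps insert_iff fst_conv insert_commute, blast+)
    thus ?thesis using that by auto
  qed
  have con: "connected_edges fst (cyc i)"
    unfolding connected_edges_def verts
  proof (intro ballI)
    fix u v assume "u \<in> {?h,?p,?q}" "v \<in> {?h,?p,?q}"
    show "(u, v) \<in> {(x, y). \<exists>e\<in>cyc i. fst e = {x, y}}\<^sup>*"
    proof (cases "u = v")
      case True thus ?thesis by (simp only: rtrancl.rtrancl_refl)
    next
      case False
      show ?thesis by (rule r_into_rtrancl, rule R) fact+
    qed
  qed
  have "card (cyc i) = 3" unfolding cyc_def by (simp add: doubleton_eq_iff)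
  thus ?thesis unfolding odd_cycle_def is_cycle_def using sub reg con by (auto simp: cyc_def)
qed

lemma cyc_idx1: "e \<in> cyc i \<Longrightarrow> \<exists>s. Tri False i s \<in> fst e"
  unfolding cyc_def by auto

lemma cyc_idx2: "e \<in> cyc i \<Longrightarrow> Tri False i' s \<in> fst e \<Longrightarrow> i' = i"
  unfolding cyc_def by auto

lemma cyc_disj: "i \<noteq> i' \<Longrightarrow> cyc i \<inter> cyc i' = {}"
  using cyc_idx1 cyc_idx2 by blast

theorem main_vtx:
  "multigraph V E fst \<and> regular V E fst r \<and> (\<exists>F. t_factor V E fst t F) \<and>
   (\<forall>C\<in>cyc ` {..<m}. odd_cycle E fst C) \<and>
   (\<forall>C\<in>cyc ` {..<m}. \<forall>D\<in>cyc ` {..<m}. C \<noteq> D \<longrightarrow> C \<inter> D = {}) \<and>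
   (\<forall>F. t_factor V E fst t F \<longrightarrow> (\<exists>C\<in>cyc ` {..<m}. F \<inter> C = {}))"
proof (intro conjI)
  show "\<exists>F. t_factor V E fst t F" using F0_factor by blast
  show "\<forall>C\<in>cyc ` {..<m}. odd_cycle E fst C" using cyc_odd by blast
  show "\<forall>C\<in>cyc ` {..<m}. \<forall>D\<in>cyc ` {..<m}. C \<noteq> D \<longrightarrow> C \<inter> D = {}"
  proof (intro ballI impI)
    fix C D assume "C \<in> cyc ` {..<m}" "D \<in> cyc ` {..<m}" "C \<noteq> D"
    then obtain i i' where "C = cyc i" "D = cyc i'" "i \<noteq> i'" by blast
    thus "C \<inter> D = {}" using cyc_disj by simp
  qed
  show "\<forall>F. t_factor V E fst t F \<longrightarrow> (\<exists>C\<in>cyc ` {..<m}. F \<inter> C = {})"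
  proof (intro allI impI)
    fix F assume "t_factor V E fst t F"
    then obtain i where "i < m" "F \<inter> cyc i = {}" using avoid by blast
    thus "\<exists>C\<in>cyc ` {..<m}. F \<inter> C = {}" by blast
  qed
qed (rule multigraph, rule regularE)

end


lemma rtrancl_map':
  assumes "(x,y) \<in> R\<^sup>*" and "\<And>a b. (a,b) \<in> R \<Longrightarrow> (f a, f b) \<in> Q"
  shows "(f x, f y) \<in> Q\<^sup>*"
  using assms(1)
proof (induction rule: rtrancl_induct)
  case base thus ?case by simp
next
  case (step y z) thus ?case using assms(2) by (meson rtrancl.rtrancl_into_rtrancl)
qed

lemma transfer_nat:
  fixes V :: "'v set" and E :: "'e set" and ends :: "'e \<Rightarrow> 'v set" and Cs :: "'e set set"
  assumes mg: "multigraph V E ends" and reg: "regular V E ends r"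
    and fac: "\<exists>F. t_factor V E ends t F" and oc: "\<forall>C\<in>Cs. odd_cycle E ends C"
    and dj: "\<forall>C\<in>Cs. \<forall>D\<in>Cs. C \<noteq> D \<longrightarrow> C \<inter> D = {}"
    and av: "\<forall>F. t_factor V E ends t F \<longrightarrow> (\<exists>C\<in>Cs. F \<inter> C = {})"
  shows "\<exists>(V' :: nat set) (E' :: nat set) (ends' :: nat \<Rightarrow> nat set) (Cs' :: nat set set).
           multigraph V' E' ends' \<and> regular V' E' ends' r \<and>
           (\<exists>F. t_factor V' E' ends' t F) \<and>
           (\<forall>C\<in>Cs'. odd_cycle E' ends' C) \<and>
           (\<forall>C\<in>Cs'. \<forall>D\<in>Cs'. C \<noteq> D \<longrightarrow> C \<inter> D = {}) \<and>
           (\<forall>F. t_factor V' E' ends' t F \<longrightarrow> (\<exists>C\<in>Cs'. F \<inter> C = {}))"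
proof -
  have finV: "finite V" and finE: "finite E" and endsV: "\<And>e. e \<in> E \<Longrightarrow> ends e \<subseteq> V"
    and two: "\<And>e. e \<in> E \<Longrightarrow> card (ends e) = 2"
    using mg unfolding multigraph_def by auto
  obtain fv :: "'v \<Rightarrow> nat" where fv: "inj_on fv V" using finite_imp_inj_to_nat_seg[OF finV] by blast
  obtain fe :: "'e \<Rightarrow> nat" where fe: "inj_on fe E" using finite_imp_inj_to_nat_seg[OF finE] by blast
  define ends' where "ends' e' = fv ` ends (the_inv_into E fe e')" for e'
  have k1: "ends' (fe e) = fv ` ends e" if "e \<in> E" for e
    unfolding ends'_def using the_inv_into_f_f[OF fe that] by simp
  have k2: "degree_in (fe ` F) ends' (fv v) = degree_in F ends v" if F: "F \<subseteq> E" and v: "v \<in> V" for F v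
  proof -
    have "{e'\<in>fe ` F. fv v \<in> ends' e'} = fe ` {e\<in>F. v \<in> ends e}"
    proof (rule set_eqI, rule iffI)
      fix e' assume "e' \<in> {e'\<in>fe ` F. fv v \<in> ends' e'}"
      then obtain e where e: "e \<in> F" "e' = fe e" "fv v \<in> ends' (fe e)" by auto
      hence "fv v \<in> fv ` ends e" using k1 F by auto
      have "ends e \<subseteq> V" using endsV e F by auto
      hence "v \<in> ends e" using inj_on_image_mem_iff[OF fv v] \<open>fv v \<in> fv ` ends e\<close> by blast
      thus "e' \<in> fe ` {e\<in>F. v \<in> ends e}" using e by auto
    next
      fix e' assume "e' \<in> fe ` {e\<in>F. v \<in> ends e}"
      then obtain e where e: "e \<in> F" "e' = fe e" "v \<in> ends e" by auto
      thus "e' \<in> {e'\<in>fe ` F. fv v \<in> ends' e'}" using k1 F by auto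
    qed
    moreover have "inj_on fe {e\<in>F. v \<in> ends e}" by (rule inj_on_subset[OF fe]) (use F in auto)
    ultimately show ?thesis unfolding degree_in_def by (simp add: card_image)
  qed
  define V' where "V' = fv ` V"
  define E' where "E' = fe ` E"
  define Cs' where "Cs' = (\<lambda>C. fe ` C) ` Cs"
  have k4: "t_factor V' E' ends' t (fe ` F)" if "t_factor V E ends t F" for F
    using that k2 unfolding t_factor_def regular_def V'_def E'_def by auto
  have k3: "t_factor V E ends t (E \<inter> fe -` F') \<and> F' = fe ` (E \<inter> fe -` F')" if F': "t_factor V' E' ends' t F'" for F'
  proof -
    have sub: "F' \<subseteq> fe ` E" using F' unfolding t_factor_def E'_def by auto
    hence eq: "F' = fe ` (E \<inter> fe -` F')" by auto
    have "degree_in (E \<inter> fe -` F') ends v = t" if "v \<in> V" for v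
      using k2[of "E \<inter> fe -` F'" v] that F' eq unfolding t_factor_def regular_def V'_def by auto
    thus ?thesis using eq unfolding t_factor_def regular_def by auto
  qed
  have mg': "multigraph V' E' ends'"
    unfolding multigraph_def V'_def E'_def
  proof (intro conjI ballI)
    fix e' assume "e' \<in> fe ` E"
    then obtain e where e: "e \<in> E" "e' = fe e" by auto
    show "ends' e' \<subseteq> fv ` V" using k1[OF e(1)] e endsV by auto
    have "inj_on fv (ends e)" using fv endsV[OF e(1)] inj_on_subset by blast
    thus "card (ends' e') = 2" using k1[OF e(1)] e two[OF e(1)] by (simp add: card_image)
  qed (use finV finE in auto)
  have reg': "regular V' E' ends' r"
    using reg k2[of E] unfolding regular_def V'_def E'_def by auto
  have oc': "odd_cycle E' ends' (fe ` C)" if C: "C \<in> Cs" for C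
  proof -
    have ocC: "odd_cycle E ends C" using oc C by blast
    hence CE: "C \<subseteq> E" and ne: "C \<noteq> {}" and regC: "regular (verts_of ends C) C ends 2"
      and conC: "connected_edges ends C" and odC: "odd (card C)"
      unfolding odd_cycle_def is_cycle_def by auto
    have vs: "verts_of ends' (fe ` C) = fv ` verts_of ends C"
    proof -
      have "(\<Union>e\<in>fe ` C. ends' e) = (\<Union>e\<in>C. ends' (fe e))" by simp
      also have "\<dots> = (\<Union>e\<in>C. fv ` ends e)" using k1 CE by (intro SUP_cong) auto
      finally show ?thesis unfolding verts_of_def by (simp add: image_UN)
    qed
    have vsV: "verts_of ends C \<subseteq> V" unfolding verts_of_def using endsV CE by auto
    have reg2: "regular (verts_of ends' (fe ` C)) (fe ` C) ends' 2"
      unfolding regular_def vs using regC k2[OF CE] vsV unfolding regular_def by auto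
    have con2: "connected_edges ends' (fe ` C)"
      unfolding connected_edges_def vs
    proof (intro ballI)
      fix u' v' assume "u' \<in> fv ` verts_of ends C" "v' \<in> fv ` verts_of ends C"
      then obtain u v where uv: "u \<in> verts_of ends C" "v \<in> verts_of ends C" "u' = fv u" "v' = fv v" by auto
      have "(u, v) \<in> {(x, y). \<exists>e\<in>C. ends e = {x, y}}\<^sup>*" using conC uv unfolding connected_edges_def by blast
      hence "(fv u, fv v) \<in> {(x, y). \<exists>e\<in>fe ` C. ends' e = {x, y}}\<^sup>*"
      proof (rule rtrancl_map')
        fix a b assume "(a, b) \<in> {(x, y). \<exists>e\<in>C. ends e = {x, y}}"
        then obtain e where "e \<in> C" "ends e = {a,b}" by auto
        hence "fe e \<in> fe ` C" "ends' (fe e) = {fv a, fv b}" using k1 CE by auto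
        thus "(fv a, fv b) \<in> {(x, y). \<exists>e\<in>fe ` C. ends' e = {x, y}}" by blast
      qed
      thus "(u', v') \<in> {(x, y). \<exists>e\<in>fe ` C. ends' e = {x, y}}\<^sup>*" using uv by simp
    qed
    have "card (fe ` C) = card C" using inj_on_subset[OF fe CE] by (simp add: card_image)
    thus ?thesis unfolding odd_cycle_def is_cycle_def using ne CE reg2 con2 odC by (auto simp: E'_def)
  qed
  show ?thesis
  proof (rule exI[of _ V'], rule exI[of _ E'], rule exI[of _ ends'], rule exI[of _ Cs'], intro conjI)
    show "multigraph V' E' ends'" by (rule mg')
    show "regular V' E' ends' r" by (rule reg')
    show "\<exists>F. t_factor V' E' ends' t F" using fac k4 by blast
    show "\<forall>C\<in>Cs'. odd_cycle E' ends' C" using oc' unfolding Cs'_def by blast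
    show "\<forall>C\<in>Cs'. \<forall>D\<in>Cs'. C \<noteq> D \<longrightarrow> C \<inter> D = {}"
    proof (intro ballI impI)
      fix C' D' assume "C' \<in> Cs'" "D' \<in> Cs'" "C' \<noteq> D'"
      then obtain C D where cd: "C \<in> Cs" "D \<in> Cs" "C' = fe ` C" "D' = fe ` D" "C \<noteq> D" unfolding Cs'_def by auto
      hence "C \<inter> D = {}" using dj by blast
      moreover have "C \<subseteq> E" "D \<subseteq> E" using oc cd unfolding odd_cycle_def is_cycle_def by auto
      ultimately have "fe ` C \<inter> fe ` D = fe ` (C \<inter> D)" using inj_on_image_Int[OF fe] by metis
      thus "C' \<inter> D' = {}" using cd \<open>C \<inter> D = {}\<close> by simp
    qed
    show "\<forall>F. t_factor V' E' ends' t F \<longrightarrow> (\<exists>C\<in>Cs'. F \<inter> C = {})"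
    proof (intro allI impI)
      fix F' assume "t_factor V' E' ends' t F'"
      hence f: "t_factor V E ends t (E \<inter> fe -` F')" "F' = fe ` (E \<inter> fe -` F')" using k3 by auto
      then obtain C where C: "C \<in> Cs" "(E \<inter> fe -` F') \<inter> C = {}" using av by blast
      have "C \<subseteq> E" using oc C unfolding odd_cycle_def is_cycle_def by auto
      moreover have "E \<inter> fe -` F' \<subseteq> E" by blast
      ultimately have "fe ` (E \<inter> fe -` F') \<inter> fe ` C = fe ` ((E \<inter> fe -` F') \<inter> C)" using inj_on_image_Int[OF fe] by metis
      hence "F' \<inter> fe ` C = {}" using C(2) f(2) by simp
      thus "\<exists>C\<in>Cs'. F' \<inter> C = {}" using C(1) unfolding Cs'_def by blast
    qed
  qed
qed


theorem theorem2p1: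
  fixes r t :: nat
  assumes "1 \<le> t" and "t + 2 \<le> r"
  shows "\<exists>(V :: nat set) (E :: nat set) (ends :: nat \<Rightarrow> nat set) (\<O> :: nat set set).
           multigraph V E ends \<and> regular V E ends r \<and>
           (\<exists>F. t_factor V E ends t F) \<and>
           (\<forall>C\<in>\<O>. odd_cycle E ends C) \<and>
           (\<forall>C\<in>\<O>. \<forall>D\<in>\<O>. C \<noteq> D \<longrightarrow> C \<inter> D = {}) \<and>
           (\<forall>F. t_factor V E ends t F \<longrightarrow> (\<exists>C\<in>\<O>. F \<inter> C = {}))"
proof -
  define l :: nat where "l = (if odd r then 1 else if odd t then 2 else 0)"
  define m where "m = (r - l) div 2"
  define k where "k = t div 2"
  define j where "j = t mod 2"
  have c: "cons r t m l k j"
  proof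
    show "2 * m + l = r" unfolding m_def l_def using assms by (auto elim!: oddE; presburger)
    show "l < r - t" unfolding l_def using assms by (auto elim!: oddE; presburger)
    show "t + 2 \<le> r" by (rule assms(2))
    show "2 * k + j = t" unfolding k_def j_def by simp
    show "k \<le> m" unfolding k_def m_def l_def using assms by (auto elim!: oddE; presburger)
    show "j \<le> l" unfolding j_def l_def by (auto elim!: oddE; presburger)
  qed
  show ?thesis
    using cons.main_vtx[OF c] by (elim conjE) (rule transfer_nat; assumption)
qed

end
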